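(* In the setup below (no gauge condition imposed on $|\Psi_x^{SE}\rangle$), assume $p(\omega|x)>0$ for all $\omega\in\checkmark$. Then $\langle F_{\Omega,x}\rangle$ is real, $I^Q=4(\langle G_{\Omega,x}\rangle-\langle F_{\Omega,x}\rangle^2)$, and the measurement encoding is lossless, i.e. $\sum_{\omega\in\checkmark}p(\omega|x)I(\sigma_{x|\omega})=I^Q$, if and only if $$\langle F_{\omega,x}\rangle=\langle F_{\Omega,x}\rangle\langle E_{\omega,x}\rangle\ \ \text{for all }\omega\in\checkmark,\qquad \langle G_{\times,x}\rangle=\langle F_{\Omega,x}\rangle\langle F_{\times,x}^\dagger\rangle .$$ In particular, losslessness requires $\partial_x\langle E_{\omega,x}\rangle=0$ for all $\omega\in\checkmark$.
   Context: Setup: finite-dimensional $\mathcal H_S,\mathcal H_E$; unit vectors $|\psi_i\rangle\in\mathcal H_S$, $|\phi_i^E\rangle\in\mathcal H_E$; a $C^1$ family of unitaries $U_x^{SE}$ on $\mathcal H_S\otimes\mathcal H_E$; an orthonormal basis $\{|\pi_\omega^E\rangle\}_{\omega\in\Omega}$ of $\mathcal H_E$, $\Omega=\checkmark\sqcup\times$. $|\Psi_x^{SE}\rangle=U_x^{SE}(|\psi_i\rangle\otimes|\phi_i^E\rangle)$, $M_{\omega,x}=\langle\pi_\omega^E|U_x^{SE}|\phi_i^E\rangle$, $|\tilde\psi_{x|\omega}\rangle=M_{\omega,x}|\psi_i\rangle$, $p(\omega|x)=\|\tilde\psi_{x|\omega}\|^2$, $\sigma_{x|\omega}=|\tilde\psi_{x|\omega}\rangle\langle\tilde\psi_{x|\omega}|/p(\omega|x)$.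 QFI of a normalized pure state: $I(|\phi_x\rangle)=4(\langle\partial_x\phi_x|\partial_x\phi_x\rangle-|\langle\phi_x|\partial_x\phi_x\rangle|^2)$; $I^Q=I(|\Psi_x^{SE}\rangle)$. Define $E_{\omega,x}=M_{\omega,x}^\dagger M_{\omega,x}$, $F_{\omega,x}=i\,\partial_xM_{\omega,x}^\dagger M_{\omega,x}$, $G_{\omega,x}=\partial_xM_{\omega,x}^\dagger\partial_xM_{\omega,x}$, and for $S\subseteq\Omega$, $X_{S,x}=\sum_{\omega\in S}X_{\omega,x}$. $\langle A\rangle=\langle\psi_i|A|\psi_i\rangle$. *)

theory Defs
  imports "HOL-Analysis.Analysis"
begin

text \<open>Finite-dimensional Hilbert spaces are modelled as complex^'n with 'n a finite type.
  H_S = complex^'s, H_E = complex^'e, H_S (x) H_E = complex^('s \<times> 'e).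
  Operators are matrices complex^'n^'m (A $ row $ column), acting by *v.\<close>

definition cinner :: "complex^'n \<Rightarrow> complex^'n \<Rightarrow> complex" where
  "cinner u v = (\<Sum>i\<in>UNIV. cnj (u$i) * v$i)"

definition adj :: "complex^'n^'m \<Rightarrow> complex^'m^'n" where
  "adj A = (\<chi> i j. cnj (A$j$i))"

definition cscale :: "complex \<Rightarrow> complex^'n^'m \<Rightarrow> complex^'n^'m" where
  "cscale c A = (\<chi> i j. c * A$i$j)"

definition unitary_mat :: "complex^'n^'n \<Rightarrow> bool" where
  "unitary_mat U \<longleftrightarrow> adj U ** U = mat 1 \<and> U ** adj U = mat 1"

definition unit_vec :: "complex^'n \<Rightarrow> bool" where
  "unit_vec v \<longleftrightarrow> cinner v v = 1"

text \<open>Orthonormal basis of complex^'e indexed by \<Omega> = UNIV :: 'w set.\<close>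
definition is_onb :: "('w \<Rightarrow> complex^'e) \<Rightarrow> bool" where
  "is_onb \<pi> \<longleftrightarrow> (\<forall>w w'. cinner (\<pi> w) (\<pi> w') = (if w = w' then 1 else 0))
                 \<and> (\<forall>v. v = (\<Sum>w\<in>UNIV. cinner (\<pi> w) v *s \<pi> w))"

definition tensor :: "complex^'s \<Rightarrow> complex^'e \<Rightarrow> complex^('s \<times> 'e)" where
  "tensor \<psi> \<phi> = (\<chi> p. \<psi>$(fst p) * \<phi>$(snd p))"

text \<open>Partial matrix element  <a|_E U |b>_E, an operator on H_S.\<close>
definition pmat :: "complex^'e \<Rightarrow> complex^('s \<times> 'e)^('s \<times> 'e) \<Rightarrow> complex^'e \<Rightarrow> complex^'s^'s" where
  "pmat a U b = (\<chi> i j. \<Sum>k\<in>UNIV. \<Sum>l\<in>UNIV. cnj (a$k) * U$(i,k)$(j,l) * b$l)"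

text \<open>QFI of a (normalized) pure state family f at parameter x.\<close>
definition QFI :: "(real \<Rightarrow> complex^'n) \<Rightarrow> real \<Rightarrow> real" where
  "QFI f x = (let d = vector_derivative f (at x) in
      4 * (Re (cinner d d) - (cmod (cinner (f x) d))\<^sup>2))"

definition expect :: "complex^'n^'n \<Rightarrow> complex^'n \<Rightarrow> complex" where
  "expect A \<psi> = cinner \<psi> (A *v \<psi>)"

definition Psi :: "(real \<Rightarrow> complex^('s \<times> 'e)^('s \<times> 'e)) \<Rightarrow> complex^'s \<Rightarrow> complex^'e \<Rightarrow> real \<Rightarrow> complex^('s \<times> 'e)" where
  "Psi U \<psi> \<phi> x = U x *v tensor \<psi> \<phi>"

definition Mop :: "(real \<Rightarrow> complex^('s \<times> 'e)^('s \<times> 'e)) \<Rightarrow> ('w \<Rightarrow> complex^'e) \<Rightarrow> complex^'e \<Rightarrow> 'w \<Rightarrow> real \<Rightarrow> complex^'s^'s" where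
  "Mop U \<pi> \<phi> w x = pmat (\<pi> w) (U x) \<phi>"

definition dMop :: "(real \<Rightarrow> complex^('s \<times> 'e)^('s \<times> 'e)) \<Rightarrow> ('w \<Rightarrow> complex^'e) \<Rightarrow> complex^'e \<Rightarrow> 'w \<Rightarrow> real \<Rightarrow> complex^'s^'s" where
  "dMop U \<pi> \<phi> w x = vector_derivative (\<lambda>y. Mop U \<pi> \<phi> w y) (at x)"

definition Eop where "Eop U \<pi> \<phi> w x = adj (Mop U \<pi> \<phi> w x) ** Mop U \<pi> \<phi> w x"
definition Fop where "Fop U \<pi> \<phi> w x = cscale \<i> (adj (dMop U \<pi> \<phi> w x) ** Mop U \<pi> \<phi> w x)"
definition Gop where "Gop U \<pi> \<phi> w x = adj (dMop U \<pi> \<phi> w x) ** dMop U \<pi> \<phi> w x"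

definition Eset where "Eset U \<pi> \<phi> S x = (\<Sum>w\<in>S. Eop U \<pi> \<phi> w x)"
definition Fset where "Fset U \<pi> \<phi> S x = (\<Sum>w\<in>S. Fop U \<pi> \<phi> w x)"
definition Gset where "Gset U \<pi> \<phi> S x = (\<Sum>w\<in>S. Gop U \<pi> \<phi> w x)"

text \<open>Unnormalized conditional state, outcome probability, and a normalized
  state vector representing sigma_{x|w}.\<close>
definition psit where "psit U \<pi> \<phi> \<psi> w x = Mop U \<pi> \<phi> w x *v \<psi>"
definition prob where "prob U \<pi> \<phi> \<psi> w x = Re (cinner (psit U \<pi> \<phi> \<psi> w x) (psit U \<pi> \<phi> \<psi> w x))"
definition sigma_vec where
  "sigma_vec U \<pi> \<phi> \<psi> w x = (1 / sqrt (prob U \<pi> \<phi> \<psi> w x)) *\<^sub>R psit U \<pi> \<phi> \<psi> w x"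

end

theory Submission imports Defs begin

lemma cinner_cnj: "cinner v u = cnj (cinner u v)"
  by (simp add: cinner_def mult.commute)

lemma cinner_add_right: "cinner u (v + w) = cinner u v + cinner u w"
  by (simp add: cinner_def distrib_left sum.distrib)
lemma cinner_add_left: "cinner (u + v) w = cinner u w + cinner v w"
  by (simp add: cinner_def distrib_right sum.distrib)
lemma cinner_diff_right: "cinner u (v - w) = cinner u v - cinner u w"
  by (simp add: cinner_def right_diff_distrib sum_subtractf)
lemma cinner_diff_left: "cinner (u - v) w = cinner u w - cinner v w"
  by (simp add: cinner_def left_diff_distrib sum_subtractf)
lemma vsc: "(c *\<^sub>R v)$i = complex_of_real c * v$i"
  by (metis vector_scaleR_component scaleR_conv_of_real)
lemma cinner_scaleR_right: "cinner u (c *\<^sub>R v) = of_real c * cinner u v"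
  by (simp add: cinner_def vsc sum_distrib_left algebra_simps del: vector_scaleR_component)
lemma cinner_scaleR_left: "cinner (c *\<^sub>R u) v = of_real c * cinner u v"
  by (simp add: cinner_def vsc sum_distrib_left algebra_simps del: vector_scaleR_component)
lemma cinner_smult_right: "cinner u (c *s v) = c * cinner u v"
  by (simp add: cinner_def sum_distrib_left algebra_simps)
lemma cinner_smult_left: "cinner (c *s u) v = cnj c * cinner u v"
  by (simp add: cinner_def sum_distrib_left algebra_simps)
lemma cinner_sum_right: "cinner u (\<Sum>i\<in>I. f i) = (\<Sum>i\<in>I. cinner u (f i))"
  by (simp add: cinner_def sum_component sum_distrib_left) (rule sum.swap)
lemma cinner_sum_left: "cinner (\<Sum>i\<in>I. f i) u = (\<Sum>i\<in>I. cinner (f i) u)"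
  by (simp add: cinner_def sum_component sum_distrib_right) (rule sum.swap)

lemma cinner_self_real: "cinner v v = of_real (Re (cinner v v))"
proof -
  have "cnj (v$i) * v$i = of_real ((Re (v$i))\<^sup>2 + (Im (v$i))\<^sup>2)" for i
    using complex_mult_cnj[of "v$i"] by (simp add: mult.commute)
  then show ?thesis by (simp add: cinner_def)
qed
lemma cinner_self_nonneg: "Re (cinner v v) \<ge> 0"
  by (simp add: cinner_def Re_sum sum_nonneg)

lemma adj_adj[simp]: "adj (adj A) = A"
  by (simp add: adj_def vec_eq_iff)

lemma cinner_adj: "cinner u (A *v v) = cinner (adj A *v u) v"
  apply (simp add: cinner_def adj_def matrix_vector_mult_def sum_distrib_left sum_distrib_right)
  apply (subst sum.swap) apply (simp add: algebra_simps)
  done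

lemma expect_EM: "expect (adj M ** M) \<psi> = cinner (M *v \<psi>) (M *v \<psi>)"
  by (simp add: expect_def matrix_vector_mul_assoc[symmetric] cinner_adj)

lemma expect_AB: "expect (adj A ** B) \<psi> = cinner (A *v \<psi>) (B *v \<psi>)"
  by (simp add: expect_def matrix_vector_mul_assoc[symmetric] cinner_adj)

lemma expect_cscale: "expect (cscale c A) \<psi> = c * expect A \<psi>"
  by (simp add: expect_def cscale_def cinner_def matrix_vector_mult_def sum_distrib_left algebra_simps)

lemma expect_adj: "expect (adj A) \<psi> = cnj (expect A \<psi>)"
proof -
  have "cnj (cinner (adj A *v \<psi>) \<psi>) = cinner \<psi> (adj A *v \<psi>)" by (simp add: cinner_cnj[of \<psi>])
  also have "\<dots> = cinner (A *v \<psi>) \<psi>" by (simp add: cinner_adj)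
  finally show ?thesis by (simp add: expect_def cinner_adj)
qed

lemma msum: "(\<Sum>i\<in>I. f i) *v v = (\<Sum>i\<in>I. f i *v v)"
  by (simp add: vec_eq_iff matrix_vector_mult_def sum_component sum_distrib_right) (intro allI, rule sum.swap)

lemma expect_sum: "expect (\<Sum>i\<in>I. f i) \<psi> = (\<Sum>i\<in>I. expect (f i) \<psi>)"
  by (simp add: expect_def msum cinner_sum_right)



definition compo :: "complex^'e::finite \<Rightarrow> complex^('s::finite \<times> 'e) \<Rightarrow> complex^'s" where
  "compo a V = (\<chi> i. \<Sum>k\<in>UNIV. cnj (a$k) * V$(i,k))"

definition rowv :: "'s::finite \<Rightarrow> complex^('s \<times> 'e::finite) \<Rightarrow> complex^'e" where
  "rowv i V = (\<chi> k. V$(i,k))"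

lemma sum_pair_UNIV: "(\<Sum>p\<in>UNIV. g p) = (\<Sum>j\<in>UNIV. \<Sum>l\<in>UNIV. g (j,l))"
  for g :: "('a::finite \<times> 'b::finite) \<Rightarrow> 'c::comm_monoid_add"
  by (simp add: sum.cartesian_product)

lemma pmat_comp: "pmat a A b *v \<psi> = compo a (A *v tensor \<psi> b)"
proof -
  have "(\<Sum>j\<in>UNIV. (\<Sum>k\<in>UNIV. \<Sum>l\<in>UNIV. cnj (a$k) * A$(i,k)$(j,l) * b$l) * \<psi>$j)
      = (\<Sum>k\<in>UNIV. cnj (a$k) * (\<Sum>j\<in>UNIV. \<Sum>l\<in>UNIV. A$(i,k)$(j,l) * (\<psi>$j * b$l)))" for i
  proof -
    have "(\<Sum>j\<in>UNIV. (\<Sum>k\<in>UNIV. \<Sum>l\<in>UNIV. cnj (a$k) * A$(i,k)$(j,l) * b$l) * \<psi>$j)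
       = (\<Sum>j\<in>UNIV. \<Sum>k\<in>UNIV. \<Sum>l\<in>UNIV. cnj (a$k) * (A$(i,k)$(j,l) * (\<psi>$j * b$l)))"
      unfolding sum_distrib_right by (simp add: ac_simps)
    also have "\<dots> = (\<Sum>k\<in>UNIV. \<Sum>j\<in>UNIV. \<Sum>l\<in>UNIV. cnj (a$k) * (A$(i,k)$(j,l) * (\<psi>$j * b$l)))"
      by (rule sum.swap)
    also have "\<dots> = (\<Sum>k\<in>UNIV. cnj (a$k) * (\<Sum>j\<in>UNIV. \<Sum>l\<in>UNIV. A$(i,k)$(j,l) * (\<psi>$j * b$l)))"
      unfolding sum_distrib_left ..
    finally show ?thesis .
  qed
  moreover have "(\<Sum>p\<in>UNIV. A$(i,k)$p * (\<psi>$(fst p) * b$(snd p)))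
      = (\<Sum>j\<in>UNIV. \<Sum>l\<in>UNIV. A$(i,k)$(j,l) * (\<psi>$j * b$l))" for i k
    by (simp only: sum_pair_UNIV[of "\<lambda>p. A$(i,k)$p * (\<psi>$(fst p) * b$(snd p))"] fst_conv snd_conv)
  moreover have "(pmat a A b *v \<psi>) $ i = (\<Sum>j\<in>UNIV. (\<Sum>k\<in>UNIV. \<Sum>l\<in>UNIV. cnj (a$k) * A$(i,k)$(j,l) * b$l) * \<psi>$j)" for i
    by (simp add: matrix_vector_mult_def pmat_def)
  moreover have "compo a (A *v tensor \<psi> b) $ i = (\<Sum>k\<in>UNIV. cnj (a$k) * (\<Sum>p\<in>UNIV. A$(i,k)$p * (\<psi>$(fst p) * b$(snd p))))" for i
    by (simp add: compo_def matrix_vector_mult_def tensor_def)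
  ultimately show ?thesis
    by (simp add: vec_eq_iff)
qed

lemma comp_row: "compo a V $ i = cinner a (rowv i V)"
  by (simp add: compo_def cinner_def rowv_def)

lemma cinner_rows: "cinner V W = (\<Sum>i\<in>UNIV. cinner (rowv i V) (rowv i W))"
  unfolding cinner_def rowv_def by (simp add: sum_pair_UNIV[of "\<lambda>p. cnj (V $ p) * W $ p"])

lemma parseval:
  assumes "is_onb \<pi>"
  shows "cinner V W = (\<Sum>w\<in>UNIV. cinner (compo (\<pi> w) V) (compo (\<pi> w) W))"
proof -
  have onb: "\<And>v. v = (\<Sum>w\<in>UNIV. cinner (\<pi> w) v *s \<pi> w)" using assms by (simp add: is_onb_def)
  have "(\<Sum>w\<in>UNIV. cinner (compo (\<pi> w) V) (compo (\<pi> w) W))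
      = (\<Sum>w\<in>UNIV. \<Sum>i\<in>UNIV. cnj (cinner (\<pi> w) (rowv i V)) * cinner (\<pi> w) (rowv i W))"
    by (simp only: cinner_def[of "compo _ V"] comp_row)
  also have "\<dots> = (\<Sum>i\<in>UNIV. \<Sum>w\<in>UNIV. cnj (cinner (\<pi> w) (rowv i V)) * cinner (\<pi> w) (rowv i W))"
    by (rule sum.swap)
  also have "\<dots> = (\<Sum>i\<in>UNIV. \<Sum>w\<in>UNIV. cinner (rowv i V) (\<pi> w) * cinner (\<pi> w) (rowv i W))"
    by (simp only: cinner_cnj[of "rowv _ V"])
  also have "\<dots> = (\<Sum>i\<in>UNIV. cinner (rowv i V) (\<Sum>w\<in>UNIV. cinner (\<pi> w) (rowv i W) *s \<pi> w))"
    by (simp only: cinner_sum_right cinner_smult_right mult.commute)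
  also have "\<dots> = (\<Sum>i\<in>UNIV. cinner (rowv i V) (rowv i W))"
    using onb[symmetric] by simp
  finally show ?thesis by (simp add: cinner_rows)
qed

lemma cinner_unitary: "unitary_mat U \<Longrightarrow> cinner (U *v v) (U *v v) = cinner v v"
  by (simp add: unitary_mat_def cinner_adj matrix_vector_mul_assoc)

lemma cinner_tensor: "cinner (tensor a b) (tensor a b) = cinner a a * cinner b b"
proof -
  have e: "cnj (a $ j * b $ l) * (a $ j * b $ l) = (cnj (a$j) * a$j) * (cnj (b$l) * b$l)" for j l
    by (simp add: mult_ac)
  have "cinner (tensor a b) (tensor a b) = (\<Sum>p\<in>UNIV. cnj (a $ fst p * b $ snd p) * (a $ fst p * b $ snd p))"
    by (simp add: cinner_def tensor_def)
  also have "\<dots> = (\<Sum>p\<in>UNIV. (cnj (a$fst p) * a$fst p) * (cnj (b$snd p) * b$snd p))"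
    by (simp only: e)
  also have "\<dots> = (\<Sum>j\<in>UNIV. \<Sum>l\<in>UNIV. (cnj (a$j) * a$j) * (cnj (b$l) * b$l))"
    by (simp only: sum_pair_UNIV[of "\<lambda>p. (cnj (a$fst p) * a$fst p) * (cnj (b$snd p) * b$snd p)"] fst_conv snd_conv)
  also have "\<dots> = cinner a a * cinner b b"
    unfolding cinner_def sum_product ..
  finally show ?thesis .
qed


lemma vsc2: "(c *\<^sub>R A)$i$j = complex_of_real c * A$i$j"
  by (metis vector_scaleR_component scaleR_conv_of_real)

lemma pmat_add: "pmat a (A + B) b = pmat a A b + pmat a B b"
  by (simp add: vec_eq_iff pmat_def distrib_left distrib_right sum.distrib)

lemma pmat_scaleR: "pmat a (r *\<^sub>R A) b = r *\<^sub>R pmat a A b"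
  by (simp add: vec_eq_iff pmat_def vsc vsc2 sum_distrib_left mult_ac del: vector_scaleR_component)

lemma bl_pmat: "bounded_linear (\<lambda>A. pmat a A b)"
  unfolding linear_conv_bounded_linear[symmetric]
  by (rule linearI) (simp_all add: pmat_add pmat_scaleR)

lemma mv_scaleR: "(r *\<^sub>R A) *v v = r *\<^sub>R (A *v v)"
  for A :: "complex^'n^'m"
  by (simp add: vec_eq_iff matrix_vector_mult_def vsc vsc2 sum_distrib_left mult_ac del: vector_scaleR_component)

lemma bl_mv: "bounded_linear (\<lambda>A::complex^'n^'m. A *v v)"
  unfolding linear_conv_bounded_linear[symmetric]
  by (rule linearI) (simp_all add: matrix_vector_mult_add_rdistrib mv_scaleR)

lemma hvd_cinner:
  assumes "(f has_vector_derivative f') (at x within S)" "(g has_vector_derivative g') (at x within S)"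
  shows "((\<lambda>y. cinner (f y) (g y)) has_vector_derivative (cinner f' (g x) + cinner (f x) g')) (at x within S)"
proof -
  have "((\<lambda>y. \<Sum>i\<in>UNIV. cnj (f y $ i) * g y $ i) has_vector_derivative
      (\<Sum>i\<in>UNIV. cnj (f x $ i) * g' $ i + cnj (f' $ i) * g x $ i)) (at x within S)"
    by (intro has_vector_derivative_sum has_vector_derivative_mult has_vector_derivative_cnj
        bounded_linear.has_vector_derivative[OF bounded_linear_vec_nth] assms)
  moreover have "(\<Sum>i\<in>UNIV. cnj (f x $ i) * g' $ i + cnj (f' $ i) * g x $ i) = cinner f' (g x) + cinner (f x) g'"
    by (simp add: cinner_def sum.distrib)
  ultimately show ?thesis by (simp add: cinner_def)
qed

lemma qfi_sigma_alg:
  fixes m d :: "complex^'n" and s g :: real and a :: complex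
  assumes s: "s > 0" and mm: "cinner m m = of_real (s\<^sup>2)" and dd: "cinner d d = of_real g" and md: "cinner m d = a"
  shows "s\<^sup>2 * (4 * (Re (cinner ((1/s) *\<^sub>R d + (- Re a / s^3) *\<^sub>R m) ((1/s) *\<^sub>R d + (- Re a / s^3) *\<^sub>R m))
       - (cmod (cinner ((1/s) *\<^sub>R m) ((1/s) *\<^sub>R d + (- Re a / s^3) *\<^sub>R m)))\<^sup>2))
     = 4 * g - 4 * (cmod a)\<^sup>2 / s\<^sup>2"
proof -
  have dm: "cinner d m = cnj a" using md by (simp add: cinner_cnj[of d])
  have e1: "cinner ((1/s) *\<^sub>R d + (- Re a / s^3) *\<^sub>R m) ((1/s) *\<^sub>R d + (- Re a / s^3) *\<^sub>R m)
      = of_real (1/s) * of_real (1/s) * of_real g + of_real (1/s) * of_real (- Re a / s^3) * cnj a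
        + of_real (- Re a / s^3) * of_real (1/s) * a + of_real (- Re a / s^3) * of_real (- Re a / s^3) * of_real (s\<^sup>2)"
    by (simp only: cinner_add_left cinner_add_right cinner_scaleR_left cinner_scaleR_right mm dd md dm)
      (simp add: algebra_simps)
  have e2: "cinner ((1/s) *\<^sub>R m) ((1/s) *\<^sub>R d + (- Re a / s^3) *\<^sub>R m)
      = of_real (1/s) * of_real (1/s) * a + of_real (1/s) * of_real (- Re a / s^3) * of_real (s\<^sup>2)"
    by (simp only: cinner_add_left cinner_add_right cinner_scaleR_left cinner_scaleR_right mm dd md dm)
      (simp add: algebra_simps)
  have r1: "Re (cinner ((1/s) *\<^sub>R d + (- Re a / s^3) *\<^sub>R m) ((1/s) *\<^sub>R d + (- Re a / s^3) *\<^sub>R m))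
      = g / s\<^sup>2 - (Re a)\<^sup>2 / (s\<^sup>2 * s\<^sup>2)"
    unfolding e1 using s by (simp add: field_simps power2_eq_square power3_eq_cube)
  have r2: "cinner ((1/s) *\<^sub>R m) ((1/s) *\<^sub>R d + (- Re a / s^3) *\<^sub>R m) = Complex 0 (Im a / s\<^sup>2)"
    unfolding e2 using s by (simp add: complex_eq_iff field_simps power2_eq_square power3_eq_cube)
  show ?thesis unfolding r1 r2 cmod_power2 using s
    by (simp add: field_simps power2_eq_square)
qed



lemma sum_split_C: "sum f (UNIV::'w::finite set) = sum f C + sum f (- C)"
  by (metis Compl_partition2 finite sum.union_disjoint Int_commute Compl_disjoint Diff_Compl Diff_cancel Diff_eq Int_absorb disjoint_eq_subset_Compl subset_refl)

lemma cmod_sq: "(cmod z)\<^sup>2 = (Re z)\<^sup>2 + (Im z)\<^sup>2"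
  by (simp add: cmod_power2)

lemma abstract_main:
  fixes p g :: "'w::finite \<Rightarrow> real" and a :: "'w \<Rightarrow> complex" and t :: real and C :: "'w set"
  assumes sp: "(\<Sum>w\<in>UNIV. p w) = 1"
    and sa: "(\<Sum>w\<in>UNIV. a w) = \<i> * of_real t"
    and pC: "\<forall>w\<in>C. p w > 0"
    and h: "\<forall>w. g w - 2 * t * Im (a w) + t\<^sup>2 * p w \<ge> 0"
  shows "((\<Sum>w\<in>C. 4 * g w - 4 * (cmod (a w))\<^sup>2 / p w) = 4 * ((\<Sum>w\<in>UNIV. g w) - t\<^sup>2))
     \<longleftrightarrow> ((\<forall>w\<in>C. \<i> * cnj (a w) = of_real t * of_real (p w))
          \<and> of_real (\<Sum>w\<in>-C. g w) = of_real t * cnj (\<Sum>w\<in>-C. \<i> * cnj (a w)))"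
    and "((\<Sum>w\<in>C. 4 * g w - 4 * (cmod (a w))\<^sup>2 / p w) = 4 * ((\<Sum>w\<in>UNIV. g w) - t\<^sup>2))
     \<Longrightarrow> (\<forall>w\<in>C. Re (a w) = 0)"
proof -
  define q where "q w = (cmod (a w - \<i> * of_real t * of_real (p w)))\<^sup>2 / p w" for w
  define hh where "hh w = g w - 2 * t * Im (a w) + t\<^sup>2 * p w" for w
  have q_eq: "q w = (cmod (a w))\<^sup>2 / p w - 2 * t * Im (a w) + t\<^sup>2 * p w" if "w \<in> C" for w
  proof -
    have "p w > 0" using pC that by auto
    then show ?thesis unfolding q_def cmod_sq by (simp add: field_simps power2_eq_square)
  qed
  have q_nn: "q w \<ge> 0" if "w \<in> C" for w using pC that unfolding q_def by auto
  have hh_nn: "hh w \<ge> 0" for w using h unfolding hh_def by auto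
  have sIm: "(\<Sum>w\<in>UNIV. Im (a w)) = t" using arg_cong[OF sa, of Im] by (simp add: Im_sum)
  have e2: "(\<Sum>w\<in>-C. hh w) = (\<Sum>w\<in>-C. g w) - 2 * t * (\<Sum>w\<in>-C. Im (a w)) + t\<^sup>2 * (\<Sum>w\<in>-C. p w)"
    unfolding hh_def by (simp add: sum.distrib sum_subtractf sum_distrib_left)
  have key: "(\<Sum>w\<in>C. q w) + (\<Sum>w\<in>-C. hh w)
     = (\<Sum>w\<in>C. (cmod (a w))\<^sup>2 / p w) + (\<Sum>w\<in>-C. g w) - t\<^sup>2"
  proof -
    have "(\<Sum>w\<in>C. q w) = (\<Sum>w\<in>C. (cmod (a w))\<^sup>2 / p w - 2 * t * Im (a w) + t\<^sup>2 * p w)"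
      using q_eq by (rule sum.cong[OF refl])
    then have e1: "(\<Sum>w\<in>C. q w) = (\<Sum>w\<in>C. (cmod (a w))\<^sup>2 / p w) - 2 * t * (\<Sum>w\<in>C. Im (a w)) + t\<^sup>2 * (\<Sum>w\<in>C. p w)"
      by (simp add: sum.distrib sum_subtractf sum_distrib_left)
    have x1: "(\<Sum>w\<in>C. Im (a w)) + (\<Sum>w\<in>-C. Im (a w)) = t" and x2: "(\<Sum>w\<in>C. p w) + (\<Sum>w\<in>-C. p w) = 1"
      using sIm sp sum_split_C[of "\<lambda>w. Im (a w)" C] sum_split_C[of p C] by simp_all
    have y1: "2 * t * (\<Sum>w\<in>C. Im (a w)) + 2 * t * (\<Sum>w\<in>-C. Im (a w)) = 2 * t * t"
      using x1 by (metis distrib_left)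
    have y2: "t\<^sup>2 * (\<Sum>w\<in>C. p w) + t\<^sup>2 * (\<Sum>w\<in>-C. p w) = t\<^sup>2"
      using x2 by (metis distrib_left mult_1_right)
    have "(\<Sum>w\<in>C. q w) + (\<Sum>w\<in>-C. hh w) = (\<Sum>w\<in>C. (cmod (a w))\<^sup>2 / p w) + (\<Sum>w\<in>-C. g w) - 2 * t * t + t\<^sup>2"
      unfolding e1 e2 using y1 y2 by linarith
    then show ?thesis by (simp add: power2_eq_square)
  qed
  have lossless_iff: "((\<Sum>w\<in>C. 4 * g w - 4 * (cmod (a w))\<^sup>2 / p w) = 4 * ((\<Sum>w\<in>UNIV. g w) - t\<^sup>2))
      \<longleftrightarrow> (\<Sum>w\<in>C. q w) + (\<Sum>w\<in>-C. hh w) = 0"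
  proof -
    have "(\<Sum>w\<in>C. 4 * g w - 4 * (cmod (a w))\<^sup>2 / p w) = 4 * (\<Sum>w\<in>C. g w) - 4 * (\<Sum>w\<in>C. (cmod (a w))\<^sup>2 / p w)"
      by (simp add: sum_subtractf sum_distrib_left)
    then show ?thesis unfolding key using sum_split_C[of g C] by argo
  qed
  have zero_iff: "(\<Sum>w\<in>C. q w) + (\<Sum>w\<in>-C. hh w) = 0 \<longleftrightarrow> (\<forall>w\<in>C. q w = 0) \<and> (\<forall>w\<in>-C. hh w = 0)"
  proof -
    have A: "(\<Sum>w\<in>C. q w) \<ge> 0" using q_nn by (simp add: sum_nonneg)
    have B: "(\<Sum>w\<in>-C. hh w) \<ge> 0" using hh_nn by (simp add: sum_nonneg)
    have "(\<Sum>w\<in>C. q w) = 0 \<longleftrightarrow> (\<forall>w\<in>C. q w = 0)"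
      using q_nn by (subst sum_nonneg_eq_0_iff) auto
    moreover have "(\<Sum>w\<in>-C. hh w) = 0 \<longleftrightarrow> (\<forall>w\<in>-C. hh w = 0)"
      using hh_nn by (subst sum_nonneg_eq_0_iff) auto
    ultimately show ?thesis using A B by linarith
  qed
  have qz: "q w = 0 \<longleftrightarrow> a w = \<i> * of_real t * of_real (p w)" if "w \<in> C" for w
    using pC that unfolding q_def by auto
  have cond_iff: "\<i> * cnj (a w) = of_real t * of_real (p w) \<longleftrightarrow> a w = \<i> * of_real t * of_real (p w)" for w
  proof -
    have "\<i> * cnj (a w) = of_real t * of_real (p w) \<longleftrightarrow> cnj (a w) = - \<i> * of_real t * of_real (p w)"
    proof
      assume "\<i> * cnj (a w) = of_real t * of_real (p w)"
      then have "- \<i> * (\<i> * cnj (a w)) = - \<i> * (of_real t * of_real (p w))" by simp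
      then show "cnj (a w) = - \<i> * of_real t * of_real (p w)" by (simp add: mult.assoc)
    next
      assume "cnj (a w) = - \<i> * of_real t * of_real (p w)"
      then show "\<i> * cnj (a w) = of_real t * of_real (p w)" by (simp add: mult.assoc[symmetric])
    qed
    also have "\<dots> \<longleftrightarrow> a w = \<i> * of_real t * of_real (p w)"
    proof
      assume "cnj (a w) = - \<i> * of_real t * of_real (p w)"
      then have "cnj (cnj (a w)) = cnj (- \<i> * of_real t * of_real (p w))" by simp
      then show "a w = \<i> * of_real t * of_real (p w)" by simp
    qed simp
    finally show ?thesis .
  qed
  have sumC: "(\<Sum>w\<in>C. a w) = \<i> * of_real t * of_real (\<Sum>w\<in>C. p w)" if "\<forall>w\<in>C. a w = \<i> * of_real t * of_real (p w)"
    using that by (simp add: sum_distrib_left)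
  have sumX: "(\<Sum>w\<in>-C. a w) = \<i> * of_real t * of_real (\<Sum>w\<in>-C. p w)" if "\<forall>w\<in>C. a w = \<i> * of_real t * of_real (p w)"
  proof -
    have "(\<Sum>w\<in>-C. a w) = \<i> * of_real t - (\<Sum>w\<in>C. a w)" using sa sum_split_C[of a C] by (simp add: eq_diff_eq add.commute)
    also have "\<dots> = \<i> * of_real t * of_real (1 - (\<Sum>w\<in>C. p w))" using sumC[OF that] by (simp add: algebra_simps)
    also have "1 - (\<Sum>w\<in>C. p w) = (\<Sum>w\<in>-C. p w)" using sp sum_split_C[of p C] by simp
    finally show ?thesis .
  qed
  have rhsG: "cnj (\<Sum>w\<in>-C. \<i> * cnj (a w)) = - \<i> * (\<Sum>w\<in>-C. a w)"
    by (simp add: sum_distrib_left)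
  show goal1: "((\<Sum>w\<in>C. 4 * g w - 4 * (cmod (a w))\<^sup>2 / p w) = 4 * ((\<Sum>w\<in>UNIV. g w) - t\<^sup>2))
     \<longleftrightarrow> ((\<forall>w\<in>C. \<i> * cnj (a w) = of_real t * of_real (p w))
          \<and> of_real (\<Sum>w\<in>-C. g w) = of_real t * cnj (\<Sum>w\<in>-C. \<i> * cnj (a w)))"
  proof
    assume L: "(\<Sum>w\<in>C. 4 * g w - 4 * (cmod (a w))\<^sup>2 / p w) = 4 * ((\<Sum>w\<in>UNIV. g w) - t\<^sup>2)"
    then have z: "(\<forall>w\<in>C. q w = 0) \<and> (\<forall>w\<in>-C. hh w = 0)" using lossless_iff zero_iff by simp
    then have aC: "\<forall>w\<in>C. a w = \<i> * of_real t * of_real (p w)" using qz by auto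
    have "(\<Sum>w\<in>-C. hh w) = 0" using z by simp
    then have G: "(\<Sum>w\<in>-C. g w) = 2 * t * (\<Sum>w\<in>-C. Im (a w)) - t\<^sup>2 * (\<Sum>w\<in>-C. p w)"
      using e2 by linarith
    have "(\<Sum>w\<in>-C. Im (a w)) = t * (\<Sum>w\<in>-C. p w)"
      using arg_cong[OF sumX[OF aC], of Im] by (simp add: Im_sum)
    then have G2: "(\<Sum>w\<in>-C. g w) = t\<^sup>2 * (\<Sum>w\<in>-C. p w)" using G by (simp add: power2_eq_square)
    show "(\<forall>w\<in>C. \<i> * cnj (a w) = of_real t * of_real (p w))
          \<and> of_real (\<Sum>w\<in>-C. g w) = of_real t * cnj (\<Sum>w\<in>-C. \<i> * cnj (a w))"
      using aC cond_iff G2 rhsG sumX[OF aC] by (simp add: power2_eq_square mult.assoc)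
  next
    assume R: "(\<forall>w\<in>C. \<i> * cnj (a w) = of_real t * of_real (p w))
          \<and> of_real (\<Sum>w\<in>-C. g w) = of_real t * cnj (\<Sum>w\<in>-C. \<i> * cnj (a w))"
    then have aC: "\<forall>w\<in>C. a w = \<i> * of_real t * of_real (p w)" using cond_iff by auto
    have "of_real (\<Sum>w\<in>-C. g w) = (of_real (t\<^sup>2 * (\<Sum>w\<in>-C. p w)) :: complex)"
      using R rhsG sumX[OF aC] by (simp add: power2_eq_square mult.assoc)
    then have G2: "(\<Sum>w\<in>-C. g w) = t\<^sup>2 * (\<Sum>w\<in>-C. p w)" using of_real_eq_iff by blast
    have "(\<Sum>w\<in>C. (cmod (a w))\<^sup>2 / p w) = (\<Sum>w\<in>C. t\<^sup>2 * p w)"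
    proof (rule sum.cong[OF refl])
      fix w assume "w \<in> C"
      then have "p w > 0" "a w = \<i> * of_real t * of_real (p w)" using pC aC by auto
      then show "(cmod (a w))\<^sup>2 / p w = t\<^sup>2 * p w"
        by (simp add: norm_mult power_mult_distrib power2_eq_square)
    qed
    have "(\<Sum>w\<in>C. (cmod (a w))\<^sup>2 / p w) + (\<Sum>w\<in>-C. g w) - t\<^sup>2 = 0"
    proof -
      have "(\<Sum>w\<in>C. t\<^sup>2 * p w) = t\<^sup>2 * (\<Sum>w\<in>C. p w)" by (simp add: sum_distrib_left)
      moreover have "t\<^sup>2 * (\<Sum>w\<in>C. p w) + t\<^sup>2 * (\<Sum>w\<in>-C. p w) = t\<^sup>2"
        using sp sum_split_C[of p C] by (metis distrib_left mult_1_right)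
      ultimately show ?thesis using G2 \<open>(\<Sum>w\<in>C. (cmod (a w))\<^sup>2 / p w) = (\<Sum>w\<in>C. t\<^sup>2 * p w)\<close> by linarith
    qed
    then show "(\<Sum>w\<in>C. 4 * g w - 4 * (cmod (a w))\<^sup>2 / p w) = 4 * ((\<Sum>w\<in>UNIV. g w) - t\<^sup>2)"
      using lossless_iff key by simp
  qed
  assume L: "(\<Sum>w\<in>C. 4 * g w - 4 * (cmod (a w))\<^sup>2 / p w) = 4 * ((\<Sum>w\<in>UNIV. g w) - t\<^sup>2)"
  then have "\<forall>w\<in>C. a w = \<i> * of_real t * of_real (p w)" using goal1 cond_iff by auto
  then show "\<forall>w\<in>C. Re (a w) = 0" by simp
qed


theorem theorem3:
  fixes U :: "real \<Rightarrow> complex^('s::finite \<times> 'e::finite)^('s \<times> 'e)"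
    and \<psi> :: "complex^'s" and \<phi> :: "complex^'e"
    and \<pi> :: "'w::finite \<Rightarrow> complex^'e"
    and C :: "'w set" and x :: real
  assumes "unit_vec \<psi>" and "unit_vec \<phi>"
    and "\<forall>y. unitary_mat (U y)"
    and "\<forall>y. U differentiable (at y)"
    and "continuous_on UNIV (\<lambda>y. vector_derivative U (at y))"
    and "is_onb \<pi>"
    and "\<forall>w\<in>C. prob U \<pi> \<phi> \<psi> w x > 0"
  shows "Im (expect (Fset U \<pi> \<phi> UNIV x) \<psi>) = 0
    \<and> complex_of_real (QFI (Psi U \<psi> \<phi>) x)
        = 4 * (expect (Gset U \<pi> \<phi> UNIV x) \<psi> - (expect (Fset U \<pi> \<phi> UNIV x) \<psi>)\<^sup>2)
    \<and> (((\<Sum>w\<in>C. prob U \<pi> \<phi> \<psi> w x * QFI (sigma_vec U \<pi> \<phi> \<psi> w) x) = QFI (Psi U \<psi> \<phi>) x)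
       \<longleftrightarrow> ((\<forall>w\<in>C. expect (Fop U \<pi> \<phi> w x) \<psi>
                      = expect (Fset U \<pi> \<phi> UNIV x) \<psi> * expect (Eop U \<pi> \<phi> w x) \<psi>)
            \<and> expect (Gset U \<pi> \<phi> (- C) x) \<psi>
                = expect (Fset U \<pi> \<phi> UNIV x) \<psi> * expect (adj (Fset U \<pi> \<phi> (- C) x)) \<psi>))
    \<and> (((\<Sum>w\<in>C. prob U \<pi> \<phi> \<psi> w x * QFI (sigma_vec U \<pi> \<phi> \<psi> w) x) = QFI (Psi U \<psi> \<phi>) x)
       \<longrightarrow> (\<forall>w\<in>C. vector_derivative (\<lambda>y. expect (Eop U \<pi> \<phi> w y) \<psi>) (at x) = 0))"
proof -
  note onb = assms(6)
  define U' where "U' = vector_derivative U (at x)"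
  have hU: "(U has_vector_derivative U') (at x)"
    unfolding U'_def using assms(4) vector_derivative_works by blast
  define D where "D = U' *v tensor \<psi> \<phi>"
  have Psi_fun: "Psi U \<psi> \<phi> = (\<lambda>y. U y *v tensor \<psi> \<phi>)" by (rule ext) (simp add: Psi_def)
  have hPsi: "(Psi U \<psi> \<phi> has_vector_derivative D) (at x)"
    unfolding Psi_fun D_def by (rule bounded_linear.has_vector_derivative[OF bl_mv hU])
  have hM: "((\<lambda>y. Mop U \<pi> \<phi> w y) has_vector_derivative pmat (\<pi> w) U' \<phi>) (at x)" for w
    unfolding Mop_def by (rule bounded_linear.has_vector_derivative[OF bl_pmat hU])
  have dMop_eq: "dMop U \<pi> \<phi> w x = pmat (\<pi> w) U' \<phi>" for w
    unfolding dMop_def using hM vector_derivative_at by blast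
  define m where "m w y = psit U \<pi> \<phi> \<psi> w y" for w y
  define d where "d w = dMop U \<pi> \<phi> w x *v \<psi>" for w
  have hm: "(m w has_vector_derivative d w) (at x)" for w
  proof -
    have "m w = (\<lambda>y. Mop U \<pi> \<phi> w y *v \<psi>)" by (rule ext) (simp add: m_def psit_def)
    then show ?thesis unfolding d_def
      using bounded_linear.has_vector_derivative[OF bl_mv hM[of w]] dMop_eq by simp
  qed
  have m_comp: "m w y = compo (\<pi> w) (Psi U \<psi> \<phi> y)" for w y
    by (simp add: m_def psit_def Mop_def pmat_comp Psi_def)
  have d_comp: "d w = compo (\<pi> w) D" for w
    by (simp add: d_def dMop_eq pmat_comp D_def)
  have nPsi: "cinner (Psi U \<psi> \<phi> y) (Psi U \<psi> \<phi> y) = 1" for y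
    using assms(1,2,3) by (simp add: Psi_def cinner_unitary cinner_tensor unit_vec_def)
  define p where "p w = prob U \<pi> \<phi> \<psi> w x" for w
  define a where "a w = cinner (m w x) (d w)" for w
  define g where "g w = Re (cinner (d w) (d w))" for w
  have mm: "cinner (m w x) (m w x) = of_real (p w)" for w
    using cinner_self_real by (simp add: p_def prob_def m_def)
  have dd: "cinner (d w) (d w) = of_real (g w)" for w
    using cinner_self_real by (simp add: g_def)
  have sum_mm: "(\<Sum>w\<in>UNIV. cinner (m w x) (m w x)) = 1"
    using nPsi[of x] parseval[OF onb, of "Psi U \<psi> \<phi> x" "Psi U \<psi> \<phi> x"] by (simp add: m_comp)
  have sp: "(\<Sum>w\<in>UNIV. p w) = 1"
    using arg_cong[OF sum_mm, of Re] by (simp add: Re_sum p_def prob_def m_def)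
  have PsiD: "cinner (Psi U \<psi> \<phi> x) D = (\<Sum>w\<in>UNIV. a w)"
    using parseval[OF onb, of "Psi U \<psi> \<phi> x" D] by (simp add: a_def m_comp d_comp)
  have DD: "cinner D D = (\<Sum>w\<in>UNIV. cinner (d w) (d w))"
    using parseval[OF onb, of D D] by (simp add: d_comp)
  have zero_der: "cinner D (Psi U \<psi> \<phi> x) + cinner (Psi U \<psi> \<phi> x) D = 0"
  proof -
    have h1: "((\<lambda>y. cinner (Psi U \<psi> \<phi> y) (Psi U \<psi> \<phi> y)) has_vector_derivative
        (cinner D (Psi U \<psi> \<phi> x) + cinner (Psi U \<psi> \<phi> x) D)) (at x)"
      by (rule hvd_cinner[OF hPsi hPsi])
    have "(\<lambda>y. cinner (Psi U \<psi> \<phi> y) (Psi U \<psi> \<phi> y)) = (\<lambda>y. 1)" using nPsi by (rule ext)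
    then have h2: "((\<lambda>y. cinner (Psi U \<psi> \<phi> y) (Psi U \<psi> \<phi> y)) has_vector_derivative 0) (at x)"
      by simp
    show ?thesis using vector_derivative_unique_at[OF h1 h2] .
  qed
  define t where "t = Im (\<Sum>w\<in>UNIV. a w)"
  have sa: "(\<Sum>w\<in>UNIV. a w) = \<i> * of_real t"
  proof -
    have "cnj (\<Sum>w\<in>UNIV. a w) + (\<Sum>w\<in>UNIV. a w) = 0"
      using zero_der PsiD cinner_cnj[of D "Psi U \<psi> \<phi> x"] by simp
    then have "Re (\<Sum>w\<in>UNIV. a w) = 0" by (simp add: complex_eq_iff)
    then show ?thesis by (simp add: complex_eq_iff t_def)
  qed
  have QFI_Psi: "QFI (Psi U \<psi> \<phi>) x = 4 * ((\<Sum>w\<in>UNIV. g w) - t\<^sup>2)"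
  proof -
    have "vector_derivative (Psi U \<psi> \<phi>) (at x) = D" using hPsi vector_derivative_at by blast
    moreover have "Re (cinner D D) = (\<Sum>w\<in>UNIV. g w)" by (simp add: DD Re_sum g_def)
    moreover have "(cmod (cinner (Psi U \<psi> \<phi> x) D))\<^sup>2 = t\<^sup>2"
      by (simp add: PsiD sa norm_mult)
    ultimately show ?thesis by (simp add: QFI_def Let_def)
  qed
  have eE: "expect (Eop U \<pi> \<phi> w y) \<psi> = cinner (m w y) (m w y)" for w y
    by (simp add: Eop_def expect_EM m_def psit_def)
  have eF: "expect (Fop U \<pi> \<phi> w x) \<psi> = \<i> * cnj (a w)" for w
    by (simp add: Fop_def expect_cscale expect_AB a_def m_def psit_def d_def cinner_cnj[of "dMop U \<pi> \<phi> w x *v \<psi>"])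
  have eG: "expect (Gop U \<pi> \<phi> w x) \<psi> = of_real (g w)" for w
    by (simp add: Gop_def expect_EM dd[symmetric] d_def)
  have eFset: "expect (Fset U \<pi> \<phi> S x) \<psi> = (\<Sum>w\<in>S. \<i> * cnj (a w))" for S
    by (simp add: Fset_def expect_sum eF)
  have eGset: "expect (Gset U \<pi> \<phi> S x) \<psi> = of_real (\<Sum>w\<in>S. g w)" for S
    by (simp add: Gset_def expect_sum eG)
  have FU: "expect (Fset U \<pi> \<phi> UNIV x) \<psi> = of_real t"
  proof -
    have "(\<Sum>w\<in>UNIV. \<i> * cnj (a w)) = \<i> * cnj (\<Sum>w\<in>UNIV. a w)" by (simp add: sum_distrib_left)
    also have "\<dots> = of_real t" by (simp add: sa)
    finally show ?thesis by (simp add: eFset)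
  qed
  have sig: "prob U \<pi> \<phi> \<psi> w x * QFI (sigma_vec U \<pi> \<phi> \<psi> w) x = 4 * g w - 4 * (cmod (a w))\<^sup>2 / p w"
    if wC: "w \<in> C" for w
  proof -
    have ppos: "p w > 0" using assms(7) wC by (simp add: p_def)
    define s where "s = sqrt (p w)"
    have spos: "s > 0" using ppos by (simp add: s_def)
    have s2: "s\<^sup>2 = p w" using ppos by (simp add: s_def)
    have prob_fun: "(\<lambda>y. prob U \<pi> \<phi> \<psi> w y) = (\<lambda>y. Re (cinner (m w y) (m w y)))"
      by (rule ext) (simp add: prob_def m_def)
    have hp: "((\<lambda>y. prob U \<pi> \<phi> \<psi> w y) has_real_derivative (2 * Re (a w))) (at x)"
    proof -
      have "((\<lambda>y. Re (cinner (m w y) (m w y))) has_vector_derivative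
          Re (cinner (d w) (m w x) + cinner (m w x) (d w))) (at x)"
        by (rule bounded_linear.has_vector_derivative[OF bounded_linear_Re hvd_cinner[OF hm hm]])
      moreover have "Re (cinner (d w) (m w x) + cinner (m w x) (d w)) = 2 * Re (a w)"
        by (simp add: a_def cinner_cnj[of "d w"])
      ultimately show ?thesis unfolding prob_fun has_real_derivative_iff_has_vector_derivative by simp
    qed
    have hsq: "((\<lambda>y. sqrt (prob U \<pi> \<phi> \<psi> w y)) has_real_derivative
        (inverse (sqrt (p w)) / 2) * (2 * Re (a w))) (at x)"
      using DERIV_chain2[OF DERIV_real_sqrt[OF ppos[unfolded p_def]] hp] by (simp add: p_def)
    have hinv: "((\<lambda>y. inverse (sqrt (prob U \<pi> \<phi> \<psi> w y))) has_real_derivative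
        - ((inverse (sqrt (p w)) / 2) * (2 * Re (a w)) * inverse (sqrt (p w) ^ Suc (Suc 0)))) (at x)"
      using DERIV_inverse_fun[OF hsq] spos by (simp add: p_def s_def)
    have c': "- ((inverse (sqrt (p w)) / 2) * (2 * Re (a w)) * inverse (sqrt (p w) ^ Suc (Suc 0))) = - Re (a w) / s^3"
      using spos by (simp add: s_def[symmetric] field_simps power3_eq_cube)
    have hc: "((\<lambda>y. 1 / sqrt (prob U \<pi> \<phi> \<psi> w y)) has_real_derivative - Re (a w) / s^3) (at x)"
      using hinv unfolding c' by (simp add: divide_inverse)
    have sig_fun: "sigma_vec U \<pi> \<phi> \<psi> w = (\<lambda>y. (1 / sqrt (prob U \<pi> \<phi> \<psi> w y)) *\<^sub>R m w y)"
      by (rule ext) (simp add: sigma_vec_def m_def)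
    have hsig: "(sigma_vec U \<pi> \<phi> \<psi> w has_vector_derivative
        (1/s) *\<^sub>R d w + (- Re (a w) / s^3) *\<^sub>R m w x) (at x)"
      unfolding sig_fun using has_vector_derivative_scaleR[OF hc hm[of w]] by (simp add: s_def p_def)
    have sx: "sigma_vec U \<pi> \<phi> \<psi> w x = (1/s) *\<^sub>R m w x"
      by (simp add: sig_fun s_def p_def)
    have Q: "QFI (sigma_vec U \<pi> \<phi> \<psi> w) x = 4 * (Re (cinner ((1/s) *\<^sub>R d w + (- Re (a w) / s^3) *\<^sub>R m w x) ((1/s) *\<^sub>R d w + (- Re (a w) / s^3) *\<^sub>R m w x))
       - (cmod (cinner ((1/s) *\<^sub>R m w x) ((1/s) *\<^sub>R d w + (- Re (a w) / s^3) *\<^sub>R m w x)))\<^sup>2)"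
      using vector_derivative_at[OF hsig] sx by (simp add: QFI_def Let_def)
    have "s\<^sup>2 * QFI (sigma_vec U \<pi> \<phi> \<psi> w) x = 4 * g w - 4 * (cmod (a w))\<^sup>2 / s\<^sup>2"
      unfolding Q by (rule qfi_sigma_alg[OF spos]) (simp_all add: mm s2 dd a_def)
    then show ?thesis using s2 by (simp add: p_def)
  qed
  have hnn: "\<forall>w. g w - 2 * t * Im (a w) + t\<^sup>2 * p w \<ge> 0"
  proof
    fix w
    let ?v = "d w - (\<i> * of_real t) *s m w x"
    have "cinner ?v ?v = cinner (d w) (d w) - (\<i> * of_real t) * cinner (d w) (m w x)
        - cnj (\<i> * of_real t) * cinner (m w x) (d w) + cnj (\<i> * of_real t) * (\<i> * of_real t) * cinner (m w x) (m w x)"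
      by (simp add: cinner_diff_left cinner_diff_right cinner_smult_left cinner_smult_right algebra_simps)
    also have "\<dots> = of_real (g w) - (\<i> * of_real t) * cnj (a w) + (\<i> * of_real t) * a w + of_real (t\<^sup>2 * p w)"
    proof -
      have cc: "cnj (\<i> * of_real t) * (\<i> * of_real t) * of_real (p w) = (of_real (t\<^sup>2 * p w) :: complex)"
        by (simp add: complex_eq_iff power2_eq_square algebra_simps)
      have dm: "cinner (d w) (m w x) = cnj (a w)" by (simp add: a_def cinner_cnj[of "d w"])
      have md: "cinner (m w x) (d w) = a w" by (simp add: a_def)
      have ci: "cnj (\<i> * of_real t) = - (\<i> * of_real t)" by simp
      show ?thesis unfolding dd mm dm md cc
        by (simp only: ci mult_minus_left diff_minus_eq_add)
    qed
    finally have "Re (cinner ?v ?v) = g w - 2 * t * Im (a w) + t\<^sup>2 * p w" by simp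
    then show "g w - 2 * t * Im (a w) + t\<^sup>2 * p w \<ge> 0" using cinner_self_nonneg[of ?v] by simp
  qed
  have sumC: "(\<Sum>w\<in>C. prob U \<pi> \<phi> \<psi> w x * QFI (sigma_vec U \<pi> \<phi> \<psi> w) x)
      = (\<Sum>w\<in>C. 4 * g w - 4 * (cmod (a w))\<^sup>2 / p w)"
    using sig by (rule sum.cong[OF refl])
  have pC: "\<forall>w\<in>C. p w > 0" using assms(7) by (simp add: p_def)
  note AM = abstract_main[OF sp sa pC hnn]
  have part1: "Im (expect (Fset U \<pi> \<phi> UNIV x) \<psi>) = 0" by (simp add: FU)
  have part2: "complex_of_real (QFI (Psi U \<psi> \<phi>) x)
        = 4 * (expect (Gset U \<pi> \<phi> UNIV x) \<psi> - (expect (Fset U \<pi> \<phi> UNIV x) \<psi>)\<^sup>2)"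
    by (simp add: QFI_Psi FU eGset)
  have part3: "(((\<Sum>w\<in>C. prob U \<pi> \<phi> \<psi> w x * QFI (sigma_vec U \<pi> \<phi> \<psi> w) x) = QFI (Psi U \<psi> \<phi>) x)
       \<longleftrightarrow> ((\<forall>w\<in>C. expect (Fop U \<pi> \<phi> w x) \<psi>
                      = expect (Fset U \<pi> \<phi> UNIV x) \<psi> * expect (Eop U \<pi> \<phi> w x) \<psi>)
            \<and> expect (Gset U \<pi> \<phi> (- C) x) \<psi>
                = expect (Fset U \<pi> \<phi> UNIV x) \<psi> * expect (adj (Fset U \<pi> \<phi> (- C) x)) \<psi>))"
    unfolding sumC QFI_Psi FU unfolding eF eE mm eGset expect_adj eFset using AM(1) by simp
  have part4: "(((\<Sum>w\<in>C. prob U \<pi> \<phi> \<psi> w x * QFI (sigma_vec U \<pi> \<phi> \<psi> w) x) = QFI (Psi U \<psi> \<phi>) x)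
       \<longrightarrow> (\<forall>w\<in>C. vector_derivative (\<lambda>y. expect (Eop U \<pi> \<phi> w y) \<psi>) (at x) = 0))"
  proof (intro impI ballI)
    fix w assume L: "(\<Sum>w\<in>C. prob U \<pi> \<phi> \<psi> w x * QFI (sigma_vec U \<pi> \<phi> \<psi> w) x) = QFI (Psi U \<psi> \<phi>) x"
      and wC: "w \<in> C"
    have "Re (a w) = 0" using AM(2) L wC unfolding sumC QFI_Psi by blast
    have "((\<lambda>y. expect (Eop U \<pi> \<phi> w y) \<psi>) has_vector_derivative
        (cinner (d w) (m w x) + cinner (m w x) (d w))) (at x)"
      unfolding eE by (rule hvd_cinner[OF hm hm])
    moreover have "cinner (d w) (m w x) + cinner (m w x) (d w) = 0"
      using \<open>Re (a w) = 0\<close> by (simp add: a_def cinner_cnj[of "d w"] complex_eq_iff)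
    ultimately show "vector_derivative (\<lambda>y. expect (Eop U \<pi> \<phi> w y) \<psi>) (at x) = 0"
      using vector_derivative_at by fastforce
  qed
  show ?thesis using part1 part2 part3 part4 by blast
qed

end
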